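(* Fix $q\in(0,1]$ and $\delta\in(0,1)$. With probability at least $1-\delta/3$, for all $t\in[T]$ and $a\in[K]$, $$M_{t,a}\ \ge\ q\,N_{t-d_a(q),a}-\sqrt{\frac{\log(3KT/\delta)}{2}\,N_{t,a}}.$$
   Context: Combinatorial semi-bandit with (possibly reward-dependent) delayed feedback: $K$ arms, horizon $T$; at each round $t$ the learner picks (based on the history of past choices and observed feedback) a vector $p_t\in[0,1]^K$ with $\sum_a p_{t,a}=L$ and a random set $A_t\subseteq[K]$, $|A_t|=L$, with $\Pr(a\in A_t\mid\text{history},p_t)=p_{t,a}$. Each arm $a$ has pairs $(R_{t,a},D_{t,a})$, $t\ge1$, with $R_{t,a}\in[0,1]$ and delay $D_{t,a}\in\{0,1,\dots\}\cup\{\infty\}$; for each arm the pairs are i.i.d. across rounds and independent of everything before round $t$. The feedback of arm $a\in A_s$ is observed at round $t$ iff $s+D_{s,a}<t$. $N_{t,a}=\sum_{s<t}\mathbb 1\{a\in A_s\}$ (with $N_{t,a}=0$ for $t\le1$, including nonpositive $t$) and $M_{t,a}=\sum_{s<t}\mathbb 1\{a\in A_s,\ s+D_{s,a}<t\}$. The $q$-quantile of arm $a$'s delay is $d_a(q)=\min\{\gamma\in\mathbb N:\Pr(D_{1,a}\le\gamma)\ge q\}$. *)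

theory Defs
  imports "HOL-Probability.Probability"
begin

text \<open>Semi-bandit with delayed feedback. Rounds are 1,2,...; arms are 1..K.
  A s w : set of arms played in round s; R s a w : reward; D s a w : delay (enat, \<infinity> allowed).\<close>

text \<open>N_{t,a}: number of rounds s < t (s \<ge> 1) in which arm a was played; t is an integer,
  so N is 0 for t \<le> 1 (including nonpositive t).\<close>
definition Ncnt :: "(nat \<Rightarrow> 'w \<Rightarrow> nat set) \<Rightarrow> int \<Rightarrow> nat \<Rightarrow> 'w \<Rightarrow> nat" where
  "Ncnt A t a w = card {s::nat. 1 \<le> s \<and> int s < t \<and> a \<in> A s w}"

text \<open>M_{t,a}: number of rounds s < t with a played whose feedback is observed by round t,
  i.e. s + D_{s,a} < t.\<close>
definition Mcnt :: "(nat \<Rightarrow> 'w \<Rightarrow> nat set) \<Rightarrow> (nat \<Rightarrow> nat \<Rightarrow> 'w \<Rightarrow> enat) \<Rightarrow> nat \<Rightarrow> nat \<Rightarrow> 'w \<Rightarrow> nat" where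
  "Mcnt A D t a w = card {s::nat. 1 \<le> s \<and> s < t \<and> a \<in> A s w \<and> enat s + D s a w < enat t}"

definition delay_quantile :: "'w measure \<Rightarrow> (nat \<Rightarrow> nat \<Rightarrow> 'w \<Rightarrow> enat) \<Rightarrow> nat \<Rightarrow> real \<Rightarrow> enat" where
  "delay_quantile M D a q =
     (if \<exists>g::nat. measure M {w \<in> space M. D 1 a w \<le> enat g} \<ge> q
      then enat (LEAST g::nat. measure M {w \<in> space M. D 1 a w \<le> enat g} \<ge> q)
      else \<infinity>)"

definition Nshift :: "(nat \<Rightarrow> 'w \<Rightarrow> nat set) \<Rightarrow> nat \<Rightarrow> enat \<Rightarrow> nat \<Rightarrow> 'w \<Rightarrow> nat" where
  "Nshift A t d a w = (case d of enat k \<Rightarrow> Ncnt A (int t - int k) a w | \<infinity> \<Rightarrow> 0)"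

definition pair_events :: "'w measure \<Rightarrow> (nat \<Rightarrow> nat \<Rightarrow> 'w \<Rightarrow> real) \<Rightarrow> (nat \<Rightarrow> nat \<Rightarrow> 'w \<Rightarrow> enat)
    \<Rightarrow> nat \<Rightarrow> nat \<Rightarrow> 'w set set" where
  "pair_events M R D s a =
     {(\<lambda>w. (R s a w, D s a w)) -` S \<inter> space M | S. S \<in> sets (borel \<Otimes>\<^sub>M count_space UNIV)}"

text \<open>Events describing everything up to (and including the choice of) round t:
  the chosen sets A_s for 1 \<le> s \<le> t and all pairs (R_{s,b},D_{s,b}) for 1 \<le> s < t and arms b in 1..K.\<close>
definition past_events :: "'w measure \<Rightarrow> nat \<Rightarrow> (nat \<Rightarrow> 'w \<Rightarrow> nat set) \<Rightarrow> (nat \<Rightarrow> nat \<Rightarrow> 'w \<Rightarrow> real)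
    \<Rightarrow> (nat \<Rightarrow> nat \<Rightarrow> 'w \<Rightarrow> enat) \<Rightarrow> nat \<Rightarrow> 'w set set" where
  "past_events M K A R D t =
     (\<Union>s\<in>{1..t}. {A s -` S \<inter> space M | S. True}) \<union>
     (\<Union>s\<in>{1..<t}. \<Union>b\<in>{1..K}. pair_events M R D s b)"

end

theory Submission
  imports Defs
begin

locale bsetup = prob_space M for M :: "'w measure" +
  fixes K :: nat and A :: "nat \<Rightarrow> 'w \<Rightarrow> nat set"
    and R :: "nat \<Rightarrow> nat \<Rightarrow> 'w \<Rightarrow> real" and D :: "nat \<Rightarrow> nat \<Rightarrow> 'w \<Rightarrow> enat"
  assumes A_meas: "\<And>t. 1 \<le> t \<Longrightarrow> A t \<in> measurable M (count_space UNIV)"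
    and R_meas: "\<And>t a. 1 \<le> t \<Longrightarrow> a \<in> {1..K} \<Longrightarrow> R t a \<in> borel_measurable M"
    and D_meas: "\<And>t a. 1 \<le> t \<Longrightarrow> a \<in> {1..K} \<Longrightarrow> D t a \<in> measurable M (count_space UNIV)"
    and ident: "\<And>t a. 1 \<le> t \<Longrightarrow> a \<in> {1..K} \<Longrightarrow>
           distr M (borel \<Otimes>\<^sub>M count_space UNIV) (\<lambda>w. (R t a w, D t a w))
         = distr M (borel \<Otimes>\<^sub>M count_space UNIV) (\<lambda>w. (R 1 a w, D 1 a w))"
    and indep: "\<And>t a. 1 \<le> t \<Longrightarrow> a \<in> {1..K} \<Longrightarrow>
           indep_set (sigma_sets (space M) (past_events M K A R D t)) (pair_events M R D t a)"
begin

definition Fm :: "nat \<Rightarrow> 'w measure" where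
  "Fm t = sigma (space M) (past_events M K A R D t)"

lemma RD_meas: "1 \<le> t \<Longrightarrow> a \<in> {1..K} \<Longrightarrow>
   (\<lambda>w. (R t a w, D t a w)) \<in> measurable M (borel \<Otimes>\<^sub>M count_space UNIV)"
  using R_meas D_meas by (intro measurable_Pair) auto

lemma pair_events_sub: "1 \<le> t \<Longrightarrow> a \<in> {1..K} \<Longrightarrow> pair_events M R D t a \<subseteq> sets M"
  unfolding pair_events_def using RD_meas by (auto intro: measurable_sets)

lemma past_Pow: "past_events M K A R D t \<subseteq> Pow (space M)"
  unfolding past_events_def pair_events_def by auto

lemma sets_Fm: "sets (Fm t) = sigma_sets (space M) (past_events M K A R D t)"
  unfolding Fm_def using past_Pow by (rule sets_measure_of)

lemma space_Fm: "space (Fm t) = space M"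
  unfolding Fm_def using past_Pow by (rule space_measure_of)

lemma A_Fm: assumes "1 \<le> s" "s \<le> t" shows "A s \<in> measurable (Fm t) (count_space UNIV)"
proof (rule measurableI)
  fix S :: "nat set set"
  have "A s -` S \<inter> space M \<in> past_events M K A R D t"
    unfolding past_events_def by (intro UnI1 UN_I[of s]) (use assms in auto)
  then show "A s -` S \<inter> space (Fm t) \<in> sets (Fm t)"
    unfolding sets_Fm space_Fm by auto
qed auto

lemma D_Fm: assumes "1 \<le> s" "s < t" "b \<in> {1..K}" shows "D s b \<in> measurable (Fm t) (count_space UNIV)"
proof (rule measurableI)
  fix S :: "enat set"
  have "(UNIV :: real set) \<times> S \<in> sets (borel \<Otimes>\<^sub>M count_space UNIV)" by auto
  then have "(\<lambda>w. (R s b w, D s b w)) -` (UNIV \<times> S) \<inter> space M \<in> pair_events M R D s b"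
    unfolding pair_events_def by blast
  moreover have "(\<lambda>w. (R s b w, D s b w)) -` (UNIV \<times> S) = D s b -` S" by auto
  ultimately have "D s b -` S \<inter> space M \<in> past_events M K A R D t"
    unfolding past_events_def using assms by auto
  then show "D s b -` S \<inter> space (Fm t) \<in> sets (Fm t)"
    unfolding sets_Fm space_Fm by auto
qed auto

definition Xv :: "nat \<Rightarrow> nat \<Rightarrow> nat \<Rightarrow> 'w \<Rightarrow> real" where
  "Xv a d r w = (if D r a w \<le> enat d then 1 else 0)"
definition cv :: "nat \<Rightarrow> nat \<Rightarrow> nat \<Rightarrow> 'w \<Rightarrow> real" where
  "cv a n r w = (if a \<in> A r w \<and> real (Ncnt A (int r) a w) < real n then 1 else 0)"
definition Wv :: "nat \<Rightarrow> nat \<Rightarrow> nat \<Rightarrow> real \<Rightarrow> real \<Rightarrow> nat \<Rightarrow> 'w \<Rightarrow> real" where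
  "Wv a d n p l t w = exp (\<Sum>r\<in>{1..<t}. cv a n r w * (l * (p - Xv a d r w) - l^2/8))"

lemma Ncnt_sum: "real (Ncnt A (int r) a w) = (\<Sum>s\<in>{1..<r}. if a \<in> A s w then 1 else 0)"
proof -
  have "{s::nat. 1 \<le> s \<and> int s < int r \<and> a \<in> A s w} = {1..<r} \<inter> {s. a \<in> A s w}" by auto
  then show ?thesis unfolding Ncnt_def by (simp add: sum.If_cases)
qed

lemma gen_meas:
  fixes N :: "'w measure"
  assumes As: "\<And>s. 1 \<le> s \<Longrightarrow> s \<le> t \<Longrightarrow> A s \<in> measurable N (count_space UNIV)"
    and Ds: "\<And>s. 1 \<le> s \<Longrightarrow> s < t \<Longrightarrow> D s a \<in> measurable N (count_space UNIV)"
  shows "1 \<le> t \<Longrightarrow> cv a n t \<in> borel_measurable N"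
    and "Wv a d n p l t \<in> borel_measurable N"
    and "(\<lambda>w. real (Ncnt A (int t) a w)) \<in> borel_measurable N"
proof -
  have pA: "Measurable.pred N (\<lambda>w. P (A s w))" if "1 \<le> s" "s \<le> t" for s and P :: "nat set \<Rightarrow> bool"
    using measurable_compose[OF As[OF that], where g=P and L="count_space UNIV"] by simp
  have pD: "Measurable.pred N (\<lambda>w. P (D s a w))" if "1 \<le> s" "s < t" for s and P :: "enat \<Rightarrow> bool"
    using measurable_compose[OF Ds[OF that], where g=P and L="count_space UNIV"] by simp
  have NN: "(\<lambda>w. real (Ncnt A (int r) a w)) \<in> borel_measurable N" if "r \<le> t" for r
    unfolding Ncnt_sum
    by (intro borel_measurable_sum measurable_If measurable_const)
       (use that pA in \<open>auto simp: pred_def\<close>)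
  show "(\<lambda>w. real (Ncnt A (int t) a w)) \<in> borel_measurable N" using NN by simp
  have cc: "cv a n r \<in> borel_measurable N" if "1 \<le> r" "r \<le> t" for r
  proof -
    note [measurable] = pA[OF that, of "\<lambda>S. a \<in> S"] NN[OF that(2)]
    show ?thesis unfolding cv_def by measurable
  qed
  then show "1 \<le> t \<Longrightarrow> cv a n t \<in> borel_measurable N" by simp
  have xx: "Xv a d r \<in> borel_measurable N" if "1 \<le> r" "r < t" for r
  proof -
    note [measurable] = pD[OF that, of "\<lambda>x. x \<le> enat d"]
    show ?thesis unfolding Xv_def by measurable
  qed
  have sm[measurable]: "(\<lambda>w. \<Sum>r\<in>{1..<t}. cv a n r w * (l * (p - Xv a d r w) - l^2/8)) \<in> borel_measurable N"
  proof (rule borel_measurable_sum)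
    fix r assume "r \<in> {1..<t}"
    then have [measurable]: "cv a n r \<in> borel_measurable N" "Xv a d r \<in> borel_measurable N"
      using cc xx by auto
    show "(\<lambda>w. cv a n r w * (l * (p - Xv a d r w) - l^2/8)) \<in> borel_measurable N" by measurable
  qed
  show "Wv a d n p l t \<in> borel_measurable N"
    unfolding Wv_def by measurable
qed

lemma indep_set_mono:
  assumes "indep_set E1 E2" "E1' \<subseteq> E1" "E2' \<subseteq> E2" shows "indep_set E1' E2'"
proof -
  have "indep_sets (case_bool E1 E2) UNIV" using assms(1) unfolding indep_set_def .
  then show ?thesis unfolding indep_set_def
    by (rule indep_sets_mono_sets) (use assms in \<open>auto split: bool.split\<close>)
qed

lemma Fm_sub: assumes "1 \<le> t" "a \<in> {1..K}" shows "sets (Fm t) \<subseteq> sets M"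
  using indep_setD_ev1[OF indep[OF assms]] unfolding sets_Fm .

lemma Fm_meas: assumes "1 \<le> t" "a \<in> {1..K}" "f \<in> measurable (Fm t) N"
  shows "f \<in> measurable M N"
proof (rule measurable_from_subalg[OF _ assms(3)])
  show "subalgebra M (Fm t)" unfolding subalgebra_def using Fm_sub[OF assms(1,2)] space_Fm by auto
qed

lemma indep_mult:
  fixes Z :: "'w \<Rightarrow> real" and h :: "enat \<Rightarrow> real"
  assumes t: "1 \<le> t" and a: "a \<in> {1..K}" and Zm: "Z \<in> borel_measurable (Fm t)"
    and Zi: "integrable M Z" and hb: "\<And>x. \<bar>h x\<bar> \<le> B"
  shows "(\<integral>w. Z w * h (D t a w) \<partial>M) = (\<integral>w. Z w \<partial>M) * (\<integral>w. h (D t a w) \<partial>M)"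
proof -
  let ?f = "\<lambda>w. (R t a w, D t a w)"
  have hm: "(\<lambda>w. h (D t a w)) \<in> borel_measurable M"
    using measurable_compose[OF D_meas[OF t a], where g=h and L=borel] by simp
  have hi: "integrable M (\<lambda>w. h (D t a w))"
    by (rule integrable_const_bound[where B=B]) (use hb hm in auto)
  have I1: "indep_set (sigma_sets (space M) (sigma_sets (space M) (past_events M K A R D t)))
                      (sigma_sets (space M) (pair_events M R D t a))"
  proof (rule indep_set_sigma_sets[OF indep[OF t a]])
    show "Int_stable (sigma_sets (space M) (past_events M K A R D t))"
      using sigma_algebra_sigma_sets[OF past_Pow] algebra.Int_stable unfolding sigma_algebra_def by blast
    show "Int_stable (pair_events M R D t a)"
    proof (rule Int_stableI)
      fix x y assume "x \<in> pair_events M R D t a" "y \<in> pair_events M R D t a"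
      then obtain S1 S2 where "x = ?f -` S1 \<inter> space M" "y = ?f -` S2 \<inter> space M"
        "S1 \<in> sets (borel \<Otimes>\<^sub>M count_space UNIV)" "S2 \<in> sets (borel \<Otimes>\<^sub>M count_space UNIV)"
        unfolding pair_events_def by blast
      then have "x \<inter> y = ?f -` (S1 \<inter> S2) \<inter> space M" "S1 \<inter> S2 \<in> sets (borel \<Otimes>\<^sub>M count_space UNIV)"
        by auto
      then show "x \<inter> y \<in> pair_events M R D t a" unfolding pair_events_def by blast
    qed
  qed
  have "indep_var borel Z borel (\<lambda>w. h (D t a w))"
    unfolding indep_var_eq
  proof (intro conjI)
    show "random_variable borel Z" using Fm_meas[OF t a Zm] .
    show "random_variable borel (\<lambda>w. h (D t a w))" using hm .
    show "indep_set (sigma_sets (space M) {Z -` S \<inter> space M |S. S \<in> sets borel})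
       (sigma_sets (space M) {(\<lambda>w. h (D t a w)) -` S \<inter> space M |S. S \<in> sets borel})"
    proof (rule indep_set_mono[OF I1])
      show "sigma_sets (space M) {Z -` S \<inter> space M |S. S \<in> sets borel}
          \<subseteq> sigma_sets (space M) (sigma_sets (space M) (past_events M K A R D t))"
      proof (rule sigma_sets_subseteq, safe)
        fix S :: "real set" assume "S \<in> sets borel"
        then have "Z -` S \<inter> space (Fm t) \<in> sets (Fm t)" by (rule measurable_sets[OF Zm])
        then show "Z -` S \<inter> space M \<in> sigma_sets (space M) (past_events M K A R D t)"
          unfolding sets_Fm space_Fm .
      qed
      show "sigma_sets (space M) {(\<lambda>w. h (D t a w)) -` S \<inter> space M |S. S \<in> sets borel}
          \<subseteq> sigma_sets (space M) (pair_events M R D t a)"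
      proof (rule sigma_sets_subseteq, safe)
        fix S :: "real set" assume S: "S \<in> sets borel"
        have gm: "(\<lambda>z. h (snd z)) \<in> borel_measurable (borel \<Otimes>\<^sub>M count_space UNIV)"
          using measurable_compose[OF measurable_snd, where g=h and L=borel] by simp
        have "(\<lambda>z. h (snd z)) -` S \<inter> space (borel \<Otimes>\<^sub>M count_space UNIV) \<in> sets (borel \<Otimes>\<^sub>M count_space UNIV)"
          using gm S by (rule measurable_sets)
        moreover have "(\<lambda>w. h (D t a w)) -` S \<inter> space M
           = ?f -` ((\<lambda>z. h (snd z)) -` S \<inter> space (borel \<Otimes>\<^sub>M count_space UNIV)) \<inter> space M"
          by (auto simp: space_pair_measure)
        ultimately show "(\<lambda>w. h (D t a w)) -` S \<inter> space M \<in> pair_events M R D t a"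
          unfolding pair_events_def by blast
      qed
    qed
  qed
  then show ?thesis by (rule indep_var_lebesgue_integral[OF _ Zi hi])
qed

definition pq :: "nat \<Rightarrow> nat \<Rightarrow> real" where
  "pq a d = prob {w \<in> space M. D 1 a w \<le> enat d}"

lemma prob_D_same: assumes t: "1 \<le> t" and a: "a \<in> {1..K}"
  shows "prob {w \<in> space M. D t a w \<le> enat d} = pq a d"
proof -
  let ?S = "(UNIV :: real set) \<times> {x. x \<le> enat d}"
  have S: "?S \<in> sets (borel \<Otimes>\<^sub>M count_space UNIV)" by auto
  have "prob {w \<in> space M. D t a w \<le> enat d} = measure (distr M (borel \<Otimes>\<^sub>M count_space UNIV) (\<lambda>w. (R t a w, D t a w))) ?S"
    by (subst measure_distr[OF RD_meas[OF t a] S]) (auto intro!: arg_cong[where f="measure M"])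
  also have "\<dots> = measure (distr M (borel \<Otimes>\<^sub>M count_space UNIV) (\<lambda>w. (R 1 a w, D 1 a w))) ?S"
    using ident[OF t a] by simp
  also have "\<dots> = pq a d" unfolding pq_def
    by (subst measure_distr[OF RD_meas[OF _ a] S]) (auto intro!: arg_cong[where f="measure M"])
  finally show ?thesis .
qed

lemma Xv_meas: assumes t: "1 \<le> t" and a: "a \<in> {1..K}" shows "Xv a d t \<in> borel_measurable M"
proof -
  have [measurable]: "D t a \<in> measurable M (count_space UNIV)" using D_meas[OF t a] .
  show ?thesis unfolding Xv_def by measurable
qed

lemma Xv_exp: assumes t: "1 \<le> t" and a: "a \<in> {1..K}" shows "expectation (Xv a d t) = pq a d"
proof -
  have [measurable]: "D t a \<in> measurable M (count_space UNIV)" using D_meas[OF t a] .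
  have "expectation (Xv a d t) = expectation (indicator {w \<in> space M. D t a w \<le> enat d})"
    by (rule Bochner_Integration.integral_cong) (auto simp: Xv_def indicator_def)
  also have "\<dots> = prob {w \<in> space M. D t a w \<le> enat d}"
    by (simp add: integral_indicator)
  finally show ?thesis using prob_D_same[OF t a] by simp
qed

lemma hoeff_step: assumes t: "1 \<le> t" and a: "a \<in> {1..K}" and l: "0 < l"
  shows "(\<integral>w. exp (l * (pq a d - Xv a d t w)) \<partial>M) \<le> exp (l^2 / 8)"
proof -
  interpret H: interval_bounded_random_variable M "\<lambda>w. - Xv a d t w" "-1" 0
  proof unfold_locales
    show "(\<lambda>w. - Xv a d t w) \<in> borel_measurable M" using Xv_meas[OF t a] by (rule borel_measurable_uminus)
    show "AE w in M. - Xv a d t w \<in> {- 1..0}" by (rule AE_I2) (simp add: Xv_def)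
  qed
  have E: "expectation (\<lambda>w. - Xv a d t w) = - pq a d"
    using Xv_exp[OF t a] by simp
  have "nn_integral M (\<lambda>w. exp (l * (- Xv a d t w - expectation (\<lambda>w. - Xv a d t w))))
        \<le> ennreal (exp (l\<^sup>2 * (0 - -1)\<^sup>2 / 8))"
    by (rule H.Hoeffdings_lemma_nn_integral[OF l])
  then have 1: "nn_integral M (\<lambda>w. exp (l * (pq a d - Xv a d t w))) \<le> ennreal (exp (l\<^sup>2 / 8))"
    unfolding E by (simp add: power2_eq_square)
  have m: "(\<lambda>w. exp (l * (pq a d - Xv a d t w))) \<in> borel_measurable M"
  proof -
    have [measurable]: "Xv a d t \<in> borel_measurable M" using Xv_meas[OF t a] .
    show ?thesis by measurable
  qed
  have int: "integrable M (\<lambda>w. exp (l * (pq a d - Xv a d t w)))"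
  proof (rule integrable_const_bound[where B="exp (l * (\<bar>pq a d\<bar> + 1))"])
    show "AE w in M. norm (exp (l * (pq a d - Xv a d t w))) \<le> exp (l * (\<bar>pq a d\<bar> + 1))"
    proof (rule AE_I2)
      fix w
      have "pq a d - Xv a d t w \<le> \<bar>pq a d\<bar> + 1" by (auto simp: Xv_def)
      then have "l * (pq a d - Xv a d t w) \<le> l * (\<bar>pq a d\<bar> + 1)" by (rule mult_left_mono) (use l in simp)
      then show "norm (exp (l * (pq a d - Xv a d t w))) \<le> exp (l * (\<bar>pq a d\<bar> + 1))" by simp
    qed
  qed (rule m)
  have "nn_integral M (\<lambda>w. exp (l * (pq a d - Xv a d t w))) = ennreal (\<integral>w. exp (l * (pq a d - Xv a d t w)) \<partial>M)"
    by (rule nn_integral_eq_integral[OF int]) auto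
  with 1 show ?thesis by (simp add: ennreal_le_iff)
qed

lemma cv01: "cv a n r w = 0 \<or> cv a n r w = 1" unfolding cv_def by auto
lemma Xv01: "Xv a d r w = 0 \<or> Xv a d r w = 1" unfolding Xv_def by auto

lemma W_pos: "0 < Wv a d n p l t w" unfolding Wv_def by simp

lemma W_bound: assumes l: "0 \<le> l"
  shows "Wv a d n p l t w \<le> exp (real t * (l * (\<bar>p\<bar> + 1) + l^2/8))"
proof -
  let ?C = "l * (\<bar>p\<bar> + 1) + l^2/8"
  have "(\<Sum>r\<in>{1..<t}. cv a n r w * (l * (p - Xv a d r w) - l^2/8)) \<le> (\<Sum>r\<in>{1..<t}. ?C)"
  proof (rule sum_mono)
    fix r
    have "p - Xv a d r w \<le> \<bar>p\<bar> + 1" using Xv01[of a d r w] by auto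
    then have "l * (p - Xv a d r w) \<le> l * (\<bar>p\<bar> + 1)" using l by (rule mult_left_mono) 
    moreover have "0 \<le> l * (\<bar>p\<bar> + 1) + l^2/8" using l by simp
    moreover have "0 \<le> l^2/8" by simp
    ultimately have "l * (p - Xv a d r w) - l^2/8 \<le> ?C" and C0: "0 \<le> ?C" by linarith+
    then show "cv a n r w * (l * (p - Xv a d r w) - l^2/8) \<le> ?C"
      using cv01[of a n r w] by (elim disjE) simp_all
  qed
  also have "\<dots> = real (t - 1) * ?C" by simp
  also have "\<dots> \<le> real t * ?C" using l by (intro mult_right_mono) auto
  finally show ?thesis unfolding Wv_def by simp
qed

lemma W_measM: assumes a: "a \<in> {1..K}"
  shows "Wv a d n p l t \<in> borel_measurable M" "1 \<le> t \<Longrightarrow> cv a n t \<in> borel_measurable M"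
  using gen_meas[of t M a, OF A_meas D_meas] a by auto

lemma W_Fm: assumes a: "a \<in> {1..K}"
  shows "Wv a d n p l t \<in> borel_measurable (Fm t)" "1 \<le> t \<Longrightarrow> cv a n t \<in> borel_measurable (Fm t)"
  using gen_meas[of t "Fm t" a, OF A_Fm D_Fm] a by auto

lemma bnd_int: fixes B :: real assumes "f \<in> borel_measurable M" "\<And>w. w \<in> space M \<Longrightarrow> \<bar>f w\<bar> \<le> B"
  shows "integrable M f"
  by (rule integrable_const_bound[where B=B]) (use assms in \<open>auto intro!: AE_I2\<close>)

lemma W_succ: assumes "1 \<le> t"
  shows "Wv a d n p l (Suc t) w = Wv a d n p l t w * (1 - cv a n t w)
     + exp (- (l^2/8)) * (Wv a d n p l t w * cv a n t w) * exp (l * (p - Xv a d t w))"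
proof -
  have "{1..<Suc t} = insert t {1..<t}" using assms by auto
  then have "Wv a d n p l (Suc t) w = Wv a d n p l t w * exp (cv a n t w * (l * (p - Xv a d t w) - l^2/8))"
    unfolding Wv_def by (simp add: exp_add)
  moreover have ee: "exp (l * (p - Xv a d t w) - l^2/8) = exp (- (l^2/8)) * exp (l * (p - Xv a d t w))"
    by (simp add: mult_exp_exp)
  ultimately have eq: "Wv a d n p l (Suc t) w = Wv a d n p l t w * exp (cv a n t w * (l * (p - Xv a d t w) - l^2/8))"
    by blast
  show ?thesis
  proof (cases "cv a n t w = 0")
    case True then show ?thesis using eq by simp
  next
    case False then have c1: "cv a n t w = 1" using cv01[of a n t w] by blast
    have "Wv a d n p l (Suc t) w = Wv a d n p l t w * exp (l * (p - Xv a d t w) - l^2/8)"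
      using eq c1 by simp
    also have "\<dots> = Wv a d n p l t w * (1 - cv a n t w)
     + exp (- (l^2/8)) * (Wv a d n p l t w * cv a n t w) * exp (l * (p - Xv a d t w))"
      unfolding ee c1 by (simp add: mult_ac)
    finally show ?thesis .
  qed
qed


lemma W_step: assumes t: "1 \<le> t" and a: "a \<in> {1..K}" and l: "0 < l"
  shows "expectation (Wv a d n (pq a d) l (Suc t)) \<le> expectation (Wv a d n (pq a d) l t)"
proof -
  let ?p = "pq a d"
  let ?W = "Wv a d n ?p l t" and ?c = "cv a n t"
  define h where "h = (\<lambda>y::enat. exp (l * (?p - (if y \<le> enat d then 1 else 0))))"
  have hX: "h (D t a w) = exp (l * (?p - Xv a d t w))" for w unfolding h_def Xv_def by simp
  define B where "B = exp (real t * (l * (\<bar>?p\<bar> + 1) + l^2/8))"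
  have Wb: "\<bar>?W w\<bar> \<le> B" for w using W_bound[of l a d n ?p t w] W_pos[of a d n ?p l t w] l by (simp add: B_def)
  have Wm[measurable]: "?W \<in> borel_measurable M" "?c \<in> borel_measurable M" using W_measM[OF a] t by auto
  have Xm[measurable]: "Xv a d t \<in> borel_measurable M" using Xv_meas[OF t a] .
  have hb: "\<bar>h y\<bar> \<le> exp (l * (\<bar>?p\<bar> + 1))" for y
  proof -
    have "?p - (if y \<le> enat d then 1 else 0) \<le> \<bar>?p\<bar> + 1" by auto
    then have "l * (?p - (if y \<le> enat d then 1 else 0)) \<le> l * (\<bar>?p\<bar> + 1)" using l by (intro mult_left_mono) auto
    then show ?thesis unfolding h_def by simp
  qed
  have cb: "\<bar>?c w\<bar> \<le> 1" for w using cv01[of a n t w] by auto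
  have cb2: "\<bar>1 - ?c w\<bar> \<le> 2" for w using cv01[of a n t w] by auto
  have B0: "0 \<le> B" by (simp add: B_def)
  have i1: "integrable M (\<lambda>w. ?W w * (1 - ?c w))"
    by (rule bnd_int[where B="B * 2"]) (use Wb cb2 B0 in \<open>auto simp: abs_mult intro!: mult_mono\<close>)
  have Wcb: "\<bar>?W w * ?c w\<bar> \<le> B" for w using Wb[of w] cv01[of a n t w] by auto
  have iWc: "integrable M (\<lambda>w. ?W w * ?c w)"
    by (rule bnd_int[where B="B"]) (use Wcb in auto)
  have i2: "integrable M (\<lambda>w. (?W w * ?c w) * h (D t a w))"
  proof (rule bnd_int[where B="B * exp (l * (\<bar>?p\<bar> + 1))"])
    show "(\<lambda>w. ?W w * ?c w * h (D t a w)) \<in> borel_measurable M"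
      unfolding hX by measurable
    fix w
    show "\<bar>?W w * ?c w * h (D t a w)\<bar> \<le> B * exp (l * (\<bar>?p\<bar> + 1))"
      unfolding abs_mult[of "?W w * ?c w"] by (rule mult_mono) (use Wcb hb B0 in auto)
  qed
  have Zm: "(\<lambda>w. ?W w * ?c w) \<in> borel_measurable (Fm t)"
    by (rule borel_measurable_times) (use W_Fm(1)[OF a, of d n ?p l t] W_Fm(2)[OF a, of t n] t in auto)
  have ind: "(\<integral>w. (?W w * ?c w) * h (D t a w) \<partial>M) = (\<integral>w. ?W w * ?c w \<partial>M) * (\<integral>w. h (D t a w) \<partial>M)"
    by (rule indep_mult[OF t a Zm iWc hb])
  have Eh: "(\<integral>w. h (D t a w) \<partial>M) \<le> exp (l^2/8)"
    unfolding hX using hoeff_step[OF t a l] .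
  have nn: "0 \<le> (\<integral>w. ?W w * ?c w \<partial>M)"
  proof (rule integral_nonneg_AE, rule AE_I2)
    fix w show "0 \<le> ?W w * ?c w" using W_pos[of a d n ?p l t w] cv01[of a n t w] by auto
  qed
  have "expectation (Wv a d n ?p l (Suc t)) =
      expectation (\<lambda>w. ?W w * (1 - ?c w) + exp (- (l^2/8)) * ((?W w * ?c w) * h (D t a w)))"
    by (intro Bochner_Integration.integral_cong refl) (simp add: W_succ[OF t] hX mult.assoc)
  also have "\<dots> = expectation (\<lambda>w. ?W w * (1 - ?c w)) + exp (- (l^2/8)) * ((\<integral>w. ?W w * ?c w \<partial>M) * (\<integral>w. h (D t a w) \<partial>M))"
    by (subst Bochner_Integration.integral_add[OF i1 integrable_mult_right[OF i2]]) (simp add: ind)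
  also have "\<dots> \<le> expectation (\<lambda>w. ?W w * (1 - ?c w)) + exp (- (l^2/8)) * ((\<integral>w. ?W w * ?c w \<partial>M) * exp (l^2/8))"
    using Eh nn by (intro add_left_mono mult_left_mono) auto
  also have "\<dots> = expectation (\<lambda>w. ?W w * (1 - ?c w)) + (\<integral>w. ?W w * ?c w \<partial>M)"
    by (simp add: exp_minus field_simps)
  also have "\<dots> = expectation (\<lambda>w. ?W w * (1 - ?c w) + ?W w * ?c w)"
    by (rule Bochner_Integration.integral_add[OF i1 iWc, symmetric])
  also have "\<dots> = expectation ?W" by (simp add: algebra_simps)
  finally show ?thesis .
qed

lemma W_le1: assumes a: "a \<in> {1..K}" and l: "0 < l" and t: "1 \<le> t"
  shows "expectation (Wv a d n (pq a d) l t) \<le> 1"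
  using t
proof (induction t rule: dec_induct)
  case base
  then show ?case by (simp add: Wv_def prob_space)
next
  case (step t)
  then show ?case using W_step[of t a l d n] a l by linarith
qed

lemma Ncnt_int_sum: "real (Ncnt A z a w) = (\<Sum>s\<in>{1..<nat z}. if a \<in> A s w then 1 else 0)"
proof -
  have "{s::nat. 1 \<le> s \<and> int s < z \<and> a \<in> A s w} = {1..<nat z} \<inter> {s. a \<in> A s w}" by auto
  then show ?thesis unfolding Ncnt_def by (simp add: sum.If_cases)
qed

lemma Mcnt_sum: "real (Mcnt A D t a w) = (\<Sum>s\<in>{1..<t}. if a \<in> A s w \<and> enat s + D s a w < enat t then 1 else 0)"
proof -
  have "{s::nat. 1 \<le> s \<and> s < t \<and> a \<in> A s w \<and> enat s + D s a w < enat t} = {1..<t} \<inter> {s. a \<in> A s w \<and> enat s + D s a w < enat t}" by auto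
  then show ?thesis unfolding Mcnt_def by (simp add: sum.If_cases)
qed

lemma predA: "1 \<le> s \<Longrightarrow> Measurable.pred M (\<lambda>w. P (A s w))"
  using measurable_compose[OF A_meas, where g=P and L="count_space UNIV"] by simp
lemma predD: "1 \<le> s \<Longrightarrow> a \<in> {1..K} \<Longrightarrow> Measurable.pred M (\<lambda>w. P (D s a w))"
  using measurable_compose[OF D_meas, where g=P and L="count_space UNIV"] by simp

lemma Ncnt_int_meas: "(\<lambda>w. real (Ncnt A z a w)) \<in> borel_measurable M"
  unfolding Ncnt_int_sum
  by (intro borel_measurable_sum measurable_If measurable_const) (use predA in \<open>auto simp: pred_def\<close>)

lemma Mcnt_meas: assumes a: "a \<in> {1..K}" shows "(\<lambda>w. real (Mcnt A D t a w)) \<in> borel_measurable M"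
  unfolding Mcnt_sum
proof (intro borel_measurable_sum measurable_If measurable_const)
  fix s assume s: "s \<in> {1..<t}"
  have "Measurable.pred M (\<lambda>w. a \<in> A s w \<and> enat s + D s a w < enat t)"
    using predA[of s "\<lambda>S. a \<in> S"] predD[of s a "\<lambda>x. enat s + x < enat t"] s a by (intro pred_intros_logic) auto
  then show "{w \<in> space M. a \<in> A s w \<and> enat s + D s a w < enat t} \<in> sets M" by (simp add: pred_def)
qed auto

lemma Nshift_meas: "(\<lambda>w. real (Nshift A t dd a w)) \<in> borel_measurable M"
  using Ncnt_int_meas by (cases dd) (auto simp: Nshift_def)

lemma cv_char:
  assumes r: "1 \<le> r" and m: "m = Ncnt A z a w"
  shows "cv a m r w = (if a \<in> A r w \<and> int r < z then 1 else 0)"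
proof -
  let ?S = "\<lambda>y. {s::nat. 1 \<le> s \<and> int s < y \<and> a \<in> A s w}"
  have fin: "finite (?S y)" for y by (rule finite_subset[of _ "{..<nat y}"]) auto
  show ?thesis
  proof (cases "a \<in> A r w")
    case True
    show ?thesis
    proof (cases "int r < z")
      case lt: True
      have "?S (int r) \<subset> ?S z" using True lt r by auto
      then have "card (?S (int r)) < card (?S z)" using fin by (intro psubset_card_mono) auto
      then show ?thesis using True lt unfolding cv_def m Ncnt_def by auto
    next
      case ge: False
      have "?S z \<subseteq> ?S (int r)" using ge by auto
      then have "card (?S z) \<le> card (?S (int r))" using fin by (intro card_mono) auto
      then show ?thesis using True ge unfolding cv_def m Ncnt_def by auto
    qed
  qed (auto simp: cv_def)
qed

lemma sum_ind_card: "finite S \<Longrightarrow> (\<Sum>r\<in>S. if P r then 1 else 0 :: real) = real (card (S \<inter> {r. P r}))"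
  by (simp add: sum.If_cases)

lemma sums_char:
  assumes z: "z \<le> int T" and m: "m = Ncnt A z a w"
  shows "(\<Sum>r\<in>{1..<T}. cv a m r w) = real m"
    and "(\<Sum>r\<in>{1..<T}. cv a m r w * Xv a d r w)
          = real (card {r. 1 \<le> r \<and> int r < z \<and> a \<in> A r w \<and> D r a w \<le> enat d})"
proof -
  have "(\<Sum>r\<in>{1..<T}. cv a m r w) = (\<Sum>r\<in>{1..<T}. if a \<in> A r w \<and> int r < z then 1 else 0)"
    by (rule sum.cong) (auto simp: cv_char[OF _ m])
  also have "\<dots> = real (card ({1..<T} \<inter> {r. a \<in> A r w \<and> int r < z}))" by (rule sum_ind_card) simp
  also have "{1..<T} \<inter> {r. a \<in> A r w \<and> int r < z} = {s. 1 \<le> s \<and> int s < z \<and> a \<in> A s w}"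
    using z by auto
  finally show "(\<Sum>r\<in>{1..<T}. cv a m r w) = real m" unfolding m Ncnt_def .
  have "(\<Sum>r\<in>{1..<T}. cv a m r w * Xv a d r w)
      = (\<Sum>r\<in>{1..<T}. if a \<in> A r w \<and> int r < z \<and> D r a w \<le> enat d then 1 else 0)"
    by (rule sum.cong) (auto simp: cv_char[OF _ m] Xv_def)
  also have "\<dots> = real (card ({1..<T} \<inter> {r. a \<in> A r w \<and> int r < z \<and> D r a w \<le> enat d}))"
    by (rule sum_ind_card) simp
  also have "{1..<T} \<inter> {r. a \<in> A r w \<and> int r < z \<and> D r a w \<le> enat d}
      = {r. 1 \<le> r \<and> int r < z \<and> a \<in> A r w \<and> D r a w \<le> enat d}"
    using z by auto
  finally show "(\<Sum>r\<in>{1..<T}. cv a m r w * Xv a d r w)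
          = real (card {r. 1 \<le> r \<and> int r < z \<and> a \<in> A r w \<and> D r a w \<le> enat d})" .
qed

lemma Mcnt_ge:
  "card {r. 1 \<le> r \<and> int r < int t - int d \<and> a \<in> A r w \<and> D r a w \<le> enat d} \<le> Mcnt A D t a w"
  unfolding Mcnt_def
proof (rule card_mono)
  show "finite {s. 1 \<le> s \<and> s < t \<and> a \<in> A s w \<and> enat s + D s a w < enat t}"
    by (rule finite_subset[of _ "{..<t}"]) auto
  show "{r. 1 \<le> r \<and> int r < int t - int d \<and> a \<in> A r w \<and> D r a w \<le> enat d}
      \<subseteq> {s. 1 \<le> s \<and> s < t \<and> a \<in> A s w \<and> enat s + D s a w < enat t}"
  proof safe
    fix r assume r: "1 \<le> r" "int r < int t - int d" "a \<in> A r w" "D r a w \<le> enat d"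
    then show "r < t" by linarith
    from r(4) obtain e where e: "D r a w = enat e" "e \<le> d" by (cases "D r a w") auto
    then show "enat r + D r a w < enat t" using r(2) by simp
  qed
qed

lemma W_large:
  assumes c: "(\<Sum>r\<in>{1..<T}. cv a n r w) = real n" and n: "0 < n"
    and e: "\<epsilon> \<le> (\<Sum>r\<in>{1..<T}. cv a n r w * (p - Xv a d r w))" and e0: "0 < \<epsilon>"
  shows "exp (2 * \<epsilon>^2 / n) \<le> Wv a d n p (4 * \<epsilon> / n) T w"
proof -
  let ?l = "4 * \<epsilon> / n"
  have "(\<Sum>r\<in>{1..<T}. cv a n r w * (?l * (p - Xv a d r w) - ?l^2/8))
      = ?l * (\<Sum>r\<in>{1..<T}. cv a n r w * (p - Xv a d r w)) - ?l^2/8 * (\<Sum>r\<in>{1..<T}. cv a n r w)"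
  proof -
    have "(\<Sum>r\<in>{1..<T}. cv a n r w * (?l * (p - Xv a d r w) - ?l^2/8))
        = (\<Sum>r\<in>{1..<T}. ?l * (cv a n r w * (p - Xv a d r w)) - ?l^2/8 * cv a n r w)"
      by (rule sum.cong) (simp_all add: algebra_simps diff_divide_distrib)
    also have "\<dots> = (\<Sum>r\<in>{1..<T}. ?l * (cv a n r w * (p - Xv a d r w))) - (\<Sum>r\<in>{1..<T}. ?l^2/8 * cv a n r w)"
      by (rule sum_subtractf)
    finally show ?thesis by (simp only: sum_distrib_left)
  qed
  also have "\<dots> \<ge> ?l * \<epsilon> - ?l^2/8 * real n"
    unfolding c using e e0 n by (intro diff_mono mult_left_mono) auto
  also have "?l * \<epsilon> - ?l^2/8 * real n = 2 * \<epsilon>^2 / n"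
    using n by (simp add: field_simps power2_eq_square)
  finally show ?thesis unfolding Wv_def by simp
qed

lemma markov:
  assumes a: "a \<in> {1..K}" and n: "0 < n" and e0: "0 < \<epsilon>" and T: "1 \<le> T"
  shows "prob {w \<in> space M. exp (2 * \<epsilon>^2 / n) \<le> Wv a d n (pq a d) (4 * \<epsilon> / n) T w}
         \<le> exp (- (2 * \<epsilon>^2 / n))"
proof -
  let ?l = "4 * \<epsilon> / n"
  let ?W = "Wv a d n (pq a d) ?l T"
  have l: "0 < ?l" using e0 n by simp
  have int: "integrable M ?W"
    by (rule bnd_int[where B="exp (real T * (?l * (\<bar>pq a d\<bar> + 1) + ?l^2/8))"])
       (use W_measM(1)[OF a] W_bound[of ?l a d n "pq a d" T] W_pos[of a d n "pq a d" ?l T] l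
        in \<open>auto simp: less_imp_le\<close>)
  have "prob {w \<in> space M. exp (2 * \<epsilon>^2 / n) \<le> ?W w} \<le> expectation ?W / exp (2 * \<epsilon>^2 / n)"
    by (rule integral_Markov_inequality_measure[OF int, where A="space M"])
       (use W_pos[of a d n "pq a d" ?l T] in \<open>auto intro: less_imp_le\<close>)
  also have "\<dots> \<le> 1 / exp (2 * \<epsilon>^2 / n)"
    using W_le1[OF a l T, of d n] by (intro divide_right_mono) auto
  also have "\<dots> = exp (- (2 * \<epsilon>^2 / n))" by (simp add: exp_minus field_simps)
  finally show ?thesis .
qed

lemma Ncnt_le: assumes "z \<le> int T" shows "Ncnt A z a w \<le> T"
proof -
  have "{s::nat. 1 \<le> s \<and> int s < z \<and> a \<in> A s w} \<subseteq> {1..<T}" using assms by auto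
  then have "Ncnt A z a w \<le> card {1..<T}" unfolding Ncnt_def by (intro card_mono) auto
  then show ?thesis by simp
qed

lemma Ncnt_mono: assumes "z \<le> z'" shows "Ncnt A z a w \<le> Ncnt A z' a w"
  unfolding Ncnt_def
proof (rule card_mono)
  show "finite {s. 1 \<le> s \<and> int s < z' \<and> a \<in> A s w}"
    by (rule finite_subset[of _ "{..<nat z'}"]) auto
qed (use assms in auto)

lemma pointwise:
  fixes q Lg :: real
  assumes w: "w \<in> space M" and t: "t \<in> {1..T}" and a: "a \<in> {1..K}" and Lg: "0 < Lg"
    and q: "0 < q"
    and notE: "\<And>m. m \<in> {1..T} \<Longrightarrow> (\<exists>g::nat. measure M {w \<in> space M. D 1 a w \<le> enat g} \<ge> q) \<Longrightarrow>
      \<not> exp (2 * (sqrt (Lg * m / 2))^2 / m) \<le>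
        Wv a (LEAST g::nat. measure M {w \<in> space M. D 1 a w \<le> enat g} \<ge> q) m
           (pq a (LEAST g::nat. measure M {w \<in> space M. D 1 a w \<le> enat g} \<ge> q))
           (4 * sqrt (Lg * m / 2) / m) T w"
  shows "real (Mcnt A D t a w) \<ge> q * real (Nshift A t (delay_quantile M D a q) a w)
              - sqrt (Lg / 2 * real (Ncnt A (int t) a w))"
proof -
  have sq0: "0 \<le> sqrt (Lg / 2 * real (Ncnt A (int t) a w))" using Lg by simp
  show ?thesis
  proof (cases "\<exists>g::nat. measure M {w \<in> space M. D 1 a w \<le> enat g} \<ge> q")
    case False
    then have N0: "Nshift A t (delay_quantile M D a q) a w = 0" by (simp add: delay_quantile_def Nshift_def)
    have "0 \<le> real (Mcnt A D t a w)" by simp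
    then show ?thesis unfolding N0 of_nat_0 mult_zero_right using sq0 by linarith
  next
    case Q: True
    define d where "d = (LEAST g::nat. measure M {w \<in> space M. D 1 a w \<le> enat g} \<ge> q)"
    have pq: "q \<le> pq a d" unfolding pq_def d_def using LeastI_ex[OF Q] .
    define z where "z = int t - int d"
    define m where "m = Ncnt A z a w"
    have Ns: "Nshift A t (delay_quantile M D a q) a w = m"
      using Q by (simp add: delay_quantile_def Nshift_def d_def z_def m_def)
    show ?thesis
    proof (cases "m = 0")
      case True
      then have N0: "Nshift A t (delay_quantile M D a q) a w = 0" using Ns by simp
      have "0 \<le> real (Mcnt A D t a w)" by simp
      then show ?thesis unfolding N0 of_nat_0 mult_zero_right using sq0 by linarith
    next
      case False
      then have m0: "0 < m" by simp
      have zT: "z \<le> int T" using t unfolding z_def by auto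
      have mT: "m \<in> {1..T}" using m0 Ncnt_le[OF zT] unfolding m_def by auto
      define eps where "eps = sqrt (Lg * m / 2)"
      have eps0: "0 < eps" unfolding eps_def using Lg m0 by simp
      have nW: "\<not> exp (2 * eps^2 / m) \<le> Wv a d m (pq a d) (4 * eps / m) T w"
        using notE[OF mT Q] unfolding eps_def d_def .
      have c: "(\<Sum>r\<in>{1..<T}. cv a m r w) = real m" using sums_char(1)[OF zT m_def] .
      have cX: "(\<Sum>r\<in>{1..<T}. cv a m r w * Xv a d r w)
          = real (card {r. 1 \<le> r \<and> int r < z \<and> a \<in> A r w \<and> D r a w \<le> enat d})"
        using sums_char(2)[OF zT m_def] .
      have lt: "(\<Sum>r\<in>{1..<T}. cv a m r w * (pq a d - Xv a d r w)) < eps"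
        using W_large[OF c m0 _ eps0, where d=d and p="pq a d"] nW by fastforce
      have "(\<Sum>r\<in>{1..<T}. cv a m r w * (pq a d - Xv a d r w))
          = pq a d * (\<Sum>r\<in>{1..<T}. cv a m r w) - (\<Sum>r\<in>{1..<T}. cv a m r w * Xv a d r w)"
        by (simp add: sum_distrib_left sum_subtractf algebra_simps)
      then have C: "real (card {r. 1 \<le> r \<and> int r < z \<and> a \<in> A r w \<and> D r a w \<le> enat d}) > pq a d * m - eps"
        using lt c cX by simp
      have MC: "real (card {r. 1 \<le> r \<and> int r < z \<and> a \<in> A r w \<and> D r a w \<le> enat d}) \<le> real (Mcnt A D t a w)"
        using Mcnt_ge[of t d a w] unfolding z_def by simp
      have "q * m \<le> pq a d * m" using pq by (intro mult_right_mono) auto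
      have "m \<le> Ncnt A (int t) a w" unfolding m_def z_def by (rule Ncnt_mono) simp
      then have "eps \<le> sqrt (Lg / 2 * real (Ncnt A (int t) a w))"
        unfolding eps_def using Lg by (intro real_sqrt_le_mono) (auto intro!: mult_left_mono)
      with C MC \<open>q * m \<le> pq a d * m\<close> Ns show ?thesis by simp
    qed
  qed
qed

lemma main_loc:
  fixes q \<delta> :: real and T :: nat
  assumes K: "1 \<le> K" and T: "1 \<le> T" and q: "0 < q" and d0: "0 < \<delta>" and d1: "\<delta> < 1"
  shows "measure M {w \<in> space M. \<forall>t\<in>{1..T}. \<forall>a\<in>{1..K}.
            real (Mcnt A D t a w) \<ge>
              q * real (Nshift A t (delay_quantile M D a q) a w)
              - sqrt (ln (3 * real K * real T / \<delta>) / 2 * real (Ncnt A (int t) a w))}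
         \<ge> 1 - \<delta> / 3"
proof -
  define Lg where "Lg = ln (3 * real K * real T / \<delta>)"
  have K1: "1 \<le> real K" and T1: "1 \<le> real T" using K T by simp_all
  have KT: "1 \<le> real K * real T" using mult_mono[OF K1 T1] by simp
  have "\<delta> < 3 * real K * real T" using KT d1 by linarith
  then have gt1: "1 < 3 * real K * real T / \<delta>" using d0 by (simp add: less_divide_eq)
  have Lg: "0 < Lg" unfolding Lg_def using gt1 by simp
  have expL: "exp (- Lg) = \<delta> / (3 * real K * real T)"
  proof -
    have "exp Lg = 3 * real K * real T / \<delta>" unfolding Lg_def using gt1 by (intro exp_ln) simp
    then show ?thesis by (simp add: exp_minus)
  qed
  define Q where "Q a = (\<exists>g::nat. measure M {w \<in> space M. D 1 a w \<le> enat g} \<ge> q)" for a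
  define dA where "dA a = (LEAST g::nat. measure M {w \<in> space M. D 1 a w \<le> enat g} \<ge> q)" for a
  define eps where "eps m = sqrt (Lg * real m / 2)" for m :: nat
  define E where "E a m = (if Q a then {w \<in> space M. exp (2 * (eps m)^2 / m) \<le>
        Wv a (dA a) m (pq a (dA a)) (4 * eps m / m) T w} else {})" for a m
  have Esets: "E a m \<in> sets M" if a: "a \<in> {1..K}" for a m
  proof -
    have [measurable]: "Wv a (dA a) m (pq a (dA a)) (4 * eps m / m) T \<in> borel_measurable M"
      using W_measM(1)[OF a] .
    have "{w \<in> space M. exp (2 * (eps m)^2 / m) \<le> Wv a (dA a) m (pq a (dA a)) (4 * eps m / m) T w} \<in> sets M"
      by measurable
    then show ?thesis unfolding E_def by simp
  qed
  have Eprob: "prob (E a m) \<le> \<delta> / (3 * real K * real T)" if a: "a \<in> {1..K}" and m: "m \<in> {1..T}" for a m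
  proof (cases "Q a")
    case True
    have m0: "0 < m" using m by auto
    have e0: "0 < eps m" unfolding eps_def using Lg m0 by simp
    have "2 * (eps m)^2 / m = Lg" unfolding eps_def using Lg m0 by simp
    then have "prob (E a m) \<le> exp (- Lg)"
      using markov[OF a m0 e0 T, of "dA a"] True unfolding E_def by simp
    then show ?thesis using expL by simp
  next
    case False then show ?thesis unfolding E_def using d0 K T by simp
  qed
  define U where "U = (\<Union>a\<in>{1..K}. \<Union>m\<in>{1..T}. E a m)"
  have Usets: "U \<in> sets M" unfolding U_def using Esets by blast
  have "prob U \<le> (\<Sum>a\<in>{1..K}. prob (\<Union>m\<in>{1..T}. E a m))"
    unfolding U_def by (rule measure_UNION_le) (use Esets in auto)
  also have "\<dots> \<le> (\<Sum>a\<in>{1..K}. \<Sum>m\<in>{1..T}. prob (E a m))"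
    by (intro sum_mono measure_UNION_le) (use Esets in auto)
  also have "\<dots> \<le> (\<Sum>a\<in>{1..K}. \<Sum>m\<in>{1..T}. \<delta> / (3 * real K * real T))"
    by (intro sum_mono Eprob) auto
  also have "\<dots> = \<delta> / 3" using K T by simp
  finally have PU: "prob U \<le> \<delta> / 3" .
  let ?G = "{w \<in> space M. \<forall>t\<in>{1..T}. \<forall>a\<in>{1..K}.
            real (Mcnt A D t a w) \<ge>
              q * real (Nshift A t (delay_quantile M D a q) a w)
              - sqrt (ln (3 * real K * real T / \<delta>) / 2 * real (Ncnt A (int t) a w))}"
  have Gsets: "?G \<in> sets M"
  proof (intro sets.sets_Collect_finite_All ballI)
    fix t a assume t: "t \<in> {1..T}" and a: "a \<in> {1..K}"
    have [measurable]: "(\<lambda>w. real (Mcnt A D t a w)) \<in> borel_measurable M" using Mcnt_meas[OF a] .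
    have [measurable]: "(\<lambda>w. real (Nshift A t (delay_quantile M D a q) a w)) \<in> borel_measurable M"
      using Nshift_meas .
    have [measurable]: "(\<lambda>w. real (Ncnt A (int t) a w)) \<in> borel_measurable M" using Ncnt_int_meas .
    show "{w \<in> space M. real (Mcnt A D t a w) \<ge>
              q * real (Nshift A t (delay_quantile M D a q) a w)
              - sqrt (ln (3 * real K * real T / \<delta>) / 2 * real (Ncnt A (int t) a w))} \<in> sets M"
      by measurable
  qed auto
  have sub: "space M - U \<subseteq> ?G"
  proof safe
    fix w t a assume w: "w \<in> space M" and nU: "w \<notin> U" and t: "t \<in> {1..T}" and a: "a \<in> {1..K}"
    have "real (Mcnt A D t a w) \<ge> q * real (Nshift A t (delay_quantile M D a q) a w)
              - sqrt (Lg / 2 * real (Ncnt A (int t) a w))"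
    proof (rule pointwise[OF w t a Lg q])
      fix m assume m: "m \<in> {1..T}" and Qa: "\<exists>g::nat. measure M {w \<in> space M. D 1 a w \<le> enat g} \<ge> q"
      have "w \<notin> E a m" using nU m a unfolding U_def by blast
      then show "\<not> exp (2 * (sqrt (Lg * m / 2))^2 / m) \<le>
        Wv a (LEAST g::nat. measure M {w \<in> space M. D 1 a w \<le> enat g} \<ge> q) m
           (pq a (LEAST g::nat. measure M {w \<in> space M. D 1 a w \<le> enat g} \<ge> q))
           (4 * sqrt (Lg * m / 2) / m) T w"
        using Qa w unfolding E_def Q_def dA_def eps_def by simp
    qed
    then show "real (Mcnt A D t a w) \<ge> q * real (Nshift A t (delay_quantile M D a q) a w)
              - sqrt (ln (3 * real K * real T / \<delta>) / 2 * real (Ncnt A (int t) a w))"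
      unfolding Lg_def .
  qed
  have "1 - \<delta> / 3 \<le> prob (space M - U)"
    using PU Usets by (simp add: prob_compl)
  also have "\<dots> \<le> prob ?G" by (rule finite_measure_mono[OF sub Gsets])
  finally show ?thesis .
qed

end

theorem mainTheorem9:
  fixes M :: "'w measure"
    and K T L :: nat
    and A :: "nat \<Rightarrow> 'w \<Rightarrow> nat set"
    and R :: "nat \<Rightarrow> nat \<Rightarrow> 'w \<Rightarrow> real"
    and D :: "nat \<Rightarrow> nat \<Rightarrow> 'w \<Rightarrow> enat"
    and q \<delta> :: real
  assumes "prob_space M"
    and "1 \<le> K" and "1 \<le> T"
    and "\<And>t w. 1 \<le> t \<Longrightarrow> w \<in> space M \<Longrightarrow> A t w \<subseteq> {1..K} \<and> card (A t w) = L"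
    and "\<And>t. 1 \<le> t \<Longrightarrow> A t \<in> measurable M (count_space UNIV)"
    and "\<And>t a. 1 \<le> t \<Longrightarrow> a \<in> {1..K} \<Longrightarrow> R t a \<in> borel_measurable M"
    and "\<And>t a. 1 \<le> t \<Longrightarrow> a \<in> {1..K} \<Longrightarrow> D t a \<in> measurable M (count_space UNIV)"
    and "\<And>t a w. 1 \<le> t \<Longrightarrow> a \<in> {1..K} \<Longrightarrow> w \<in> space M \<Longrightarrow> R t a w \<in> {0..1}"
    and "\<And>t a. 1 \<le> t \<Longrightarrow> a \<in> {1..K} \<Longrightarrow>
           distr M (borel \<Otimes>\<^sub>M count_space UNIV) (\<lambda>w. (R t a w, D t a w))
         = distr M (borel \<Otimes>\<^sub>M count_space UNIV) (\<lambda>w. (R 1 a w, D 1 a w))"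
    and "\<And>t a. 1 \<le> t \<Longrightarrow> a \<in> {1..K} \<Longrightarrow>
           prob_space.indep_set M (sigma_sets (space M) (past_events M K A R D t)) (pair_events M R D t a)"
    and "0 < q" and "q \<le> 1" and "0 < \<delta>" and "\<delta> < 1"
  shows "measure M {w \<in> space M. \<forall>t\<in>{1..T}. \<forall>a\<in>{1..K}.
            real (Mcnt A D t a w) \<ge>
              q * real (Nshift A t (delay_quantile M D a q) a w)
              - sqrt (ln (3 * real K * real T / \<delta>) / 2 * real (Ncnt A (int t) a w))}
         \<ge> 1 - \<delta> / 3"
  proof -
  interpret bsetup M K A R D
    by (rule bsetup.intro[OF assms(1) bsetup_axioms.intro[OF assms(5) assms(6) assms(7) assms(9) assms(10)]])
  show ?thesis by (rule main_loc) (use assms in auto)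
qed

end
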